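(* Let $\alpha\in\mathbb{R}\setminus\{0\}$, let $\delta^{\star}(\alpha)=1/\alpha^2$ if $\alpha\le 2$ and $\delta^{\star}(\alpha)=\frac{1}{2\alpha}\exp\{1-\frac{\alpha}{2}\}$ if $\alpha>2$, let $|\delta|\le\delta^{\star}(\alpha)$, and let $C(u,v)=uv+\delta(1-e^{\alpha(u-u^2)})(1-e^{\alpha(v-v^2)})$ on $[0,1]^2$. Then $C$ has no tail dependence: $$\lambda_L=\lim_{u\to0^+}\frac{C(u,u)}{u}=0,\qquad \lambda_U=\lim_{u\to1^-}\frac{1-2u+C(u,u)}{1-u}=0.$$ *)

theory Defs
  imports Complex_Main
begin

definition delta_star :: "real \<Rightarrow> real" where
  "delta_star \<alpha> = (if \<alpha> \<le> 2 then 1 / \<alpha>^2 else (1 / (2 * \<alpha>)) * exp (1 - \<alpha> / 2))"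

definition copC :: "real \<Rightarrow> real \<Rightarrow> real \<Rightarrow> real \<Rightarrow> real" where
  "copC \<alpha> \<delta> u v = u * v + \<delta> * (1 - exp (\<alpha> * (u - u^2))) * (1 - exp (\<alpha> * (v - v^2)))"

end

theory Submission
  imports Defs
begin

lemma hderiv: fixes \<alpha> x :: real shows "((\<lambda>u. 1 - exp (\<alpha> * (u - u^2))) has_field_derivative
   (- (exp (\<alpha> * (x - x^2)) * (\<alpha> * (1 - 2*x))))) (at x)"
  by (auto intro!: derivative_eq_intros simp: algebra_simps)

lemma hquot: fixes \<alpha> x :: real shows "((\<lambda>y. ((1 - exp (\<alpha> * (y - y^2))) - (1 - exp (\<alpha> * (x - x^2)))) / (y - x)) \<longlongrightarrow>
   (- (exp (\<alpha> * (x - x^2)) * (\<alpha> * (1 - 2*x))))) (at x)"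
  using hderiv[of \<alpha> x] unfolding has_field_derivative_iff by simp

lemma hcont: fixes \<alpha> x :: real and F :: "real filter" assumes that: "F \<le> at x"
  shows "((\<lambda>u. 1 - exp (\<alpha> * (u - u^2))) \<longlongrightarrow> (1 - exp (\<alpha> * (x - x^2)))) F"
proof -
  have "((\<lambda>u. 1 - exp (\<alpha> * (u - u^2))) \<longlongrightarrow> (1 - exp (\<alpha> * (x - x^2)))) (at x)"
    by (intro tendsto_intros)
  then show ?thesis using tendsto_mono that by blast
qed

theorem proposition4:
  fixes \<alpha> \<delta> :: real
  assumes "\<alpha> \<noteq> 0"
    and "\<bar>\<delta>\<bar> \<le> delta_star \<alpha>"
  shows "((\<lambda>u. copC \<alpha> \<delta> u u / u) \<longlongrightarrow> 0) (at_right 0) \<and>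
         ((\<lambda>u. (1 - 2 * u + copC \<alpha> \<delta> u u) / (1 - u)) \<longlongrightarrow> 0) (at_left 1)"
proof
  let ?h = "\<lambda>u::real. 1 - exp (\<alpha> * (u - u^2))"
  have q0: "((\<lambda>u. ?h u / u) \<longlongrightarrow> -\<alpha>) (at_right 0)"
    using tendsto_mono[OF at_le[OF subset_UNIV] hquot[of \<alpha> 0]] by simp
  have c0: "(?h \<longlongrightarrow> 0) (at_right 0)"
    using hcont[of "at_right (0::real)" 0 \<alpha>] by (simp add: at_le[OF subset_UNIV])
  have "((\<lambda>u. u + \<delta> * (?h u / u) * ?h u) \<longlongrightarrow> 0 + \<delta> * (-\<alpha>) * 0) (at_right 0)"
    by (intro tendsto_intros q0 c0)
  moreover have "eventually (\<lambda>u. u + \<delta> * (?h u / u) * ?h u = copC \<alpha> \<delta> u u / u) (at_right 0)"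
  proof -
    have "eventually (\<lambda>u::real. u > 0) (at_right 0)" by (simp add: eventually_at_right_less)
    then show ?thesis
    proof (rule eventually_mono)
      fix u :: real assume "u > 0"
      then show "u + \<delta> * (?h u / u) * ?h u = copC \<alpha> \<delta> u u / u"
        unfolding copC_def by (simp add: field_simps power2_eq_square)
    qed
  qed
  ultimately show "((\<lambda>u. copC \<alpha> \<delta> u u / u) \<longlongrightarrow> 0) (at_right 0)"
    using tendsto_cong by force
next
  let ?h = "\<lambda>u::real. 1 - exp (\<alpha> * (u - u^2))"
  have q1: "((\<lambda>u. ?h u / (u - 1)) \<longlongrightarrow> \<alpha>) (at_left 1)"
    using tendsto_mono[OF at_le[OF subset_UNIV] hquot[of \<alpha> 1]] by simp
  have c1: "(?h \<longlongrightarrow> 0) (at_left 1)"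
    using hcont[of "at_left (1::real)" 1 \<alpha>] by (simp add: at_le[OF subset_UNIV])
  have l1: "((\<lambda>u::real. 1 - u) \<longlongrightarrow> 1 - 1) (at_left 1)"
    by (intro tendsto_intros)
  have "((\<lambda>u. (1 - u) - \<delta> * (?h u / (u - 1)) * ?h u) \<longlongrightarrow> (1 - 1) - \<delta> * \<alpha> * 0) (at_left 1)"
    by (intro tendsto_intros q1 c1)
  moreover have "eventually (\<lambda>u. (1 - u) - \<delta> * (?h u / (u - 1)) * ?h u
      = (1 - 2 * u + copC \<alpha> \<delta> u u) / (1 - u)) (at_left 1)"
  proof -
    have "eventually (\<lambda>u::real. u < 1) (at_left 1)" unfolding eventually_at_left_field by (auto intro!: exI[of _ 0])
    then show ?thesis
    proof (rule eventually_mono)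
      fix u :: real assume "u < 1"
      then have ne: "1 - u \<noteq> 0" "u - 1 \<noteq> 0" by auto
      show "(1 - u) - \<delta> * (?h u / (u - 1)) * ?h u = (1 - 2 * u + copC \<alpha> \<delta> u u) / (1 - u)"
        using ne unfolding copC_def by (simp add: field_simps power2_eq_square)
    qed
  qed
  ultimately show "((\<lambda>u. (1 - 2 * u + copC \<alpha> \<delta> u u) / (1 - u)) \<longlongrightarrow> 0) (at_left 1)"
    using tendsto_cong by force
qed

end
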